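(* Let $G$ be a uniformly dense graph with at least one edge and maximum degree $\Delta(G)$. Then $G$ is $(\rho(G)/\Delta(G))$-tough. If, furthermore, $G$ is regular and connected, then $G$ is $1$-tough.
   Context: Graphs are finite and simple (no loops, no multiple edges). The cycle matroid $M(G)$ has ground set $E$ and bases the spanning trees (maximal acyclic edge subsets). For $A\subseteq E$, $c(A)$ is the number of connected components of the graph $(V,A)$, and $\operatorname{rank}(A)=|V|-c(A)$. The density of $G$ is $\rho(G)=|E|/\operatorname{rank}(E)$. $G$ is uniformly dense if $|A|/\operatorname{rank}(A)\le\rho(G)$ for every nonempty $A\subseteq E$. A graph is $t$-tough if for every set $U$ of $k$ vertices, removing $U$ (and its incident edges) increases the number of connected components by at most $k/t$; the complete graph is considered $t$-tough for every $t$. *)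

theory Defs
  imports Complex_Main
begin

definition simple_graph :: "'a set \<Rightarrow> 'a set set \<Rightarrow> bool" where
  "simple_graph V E \<longleftrightarrow> finite V \<and> (\<forall>e\<in>E. \<exists>u v. u \<in> V \<and> v \<in> V \<and> u \<noteq> v \<and> e = {u, v})"

definition reach :: "'a set \<Rightarrow> 'a set set \<Rightarrow> ('a \<times> 'a) set" where
  "reach V A = ({(u, v). u \<in> V \<and> v \<in> V \<and> {u, v} \<in> A})\<^sup>* \<inter> (V \<times> V)"

definition ncomp :: "'a set \<Rightarrow> 'a set set \<Rightarrow> nat" where
  "ncomp V A = card (V // reach V A)"

text \<open>Rank in the cycle matroid: rank(A) = |V| - c(A).\<close>
definition mrank :: "'a set \<Rightarrow> 'a set set \<Rightarrow> nat" where
  "mrank V A = card V - ncomp V A"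

definition density :: "'a set \<Rightarrow> 'a set set \<Rightarrow> real" where
  "density V E = real (card E) / real (mrank V E)"

definition uniformly_dense :: "'a set \<Rightarrow> 'a set set \<Rightarrow> bool" where
  "uniformly_dense V E \<longleftrightarrow>
     (\<forall>A. A \<subseteq> E \<and> A \<noteq> {} \<longrightarrow> real (card A) / real (mrank V A) \<le> density V E)"

definition degree :: "'a set set \<Rightarrow> 'a \<Rightarrow> nat" where
  "degree E v = card {e \<in> E. v \<in> e}"

definition max_degree :: "'a set \<Rightarrow> 'a set set \<Rightarrow> nat" where
  "max_degree V E = Max (degree E ` V)"

definition regular :: "'a set \<Rightarrow> 'a set set \<Rightarrow> bool" where
  "regular V E \<longleftrightarrow> (\<forall>u\<in>V. \<forall>v\<in>V. degree E u = degree E v)"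

definition connected_graph :: "'a set \<Rightarrow> 'a set set \<Rightarrow> bool" where
  "connected_graph V E \<longleftrightarrow> ncomp V E = 1"

definition complete_graph :: "'a set \<Rightarrow> 'a set set \<Rightarrow> bool" where
  "complete_graph V E \<longleftrightarrow> (\<forall>u\<in>V. \<forall>v\<in>V. u \<noteq> v \<longrightarrow> {u, v} \<in> E)"

definition del_edges :: "'a set set \<Rightarrow> 'a set \<Rightarrow> 'a set set" where
  "del_edges E U = {e \<in> E. e \<inter> U = {}}"

definition tough :: "'a set \<Rightarrow> 'a set set \<Rightarrow> real \<Rightarrow> bool" where
  "tough V E t \<longleftrightarrow> complete_graph V E \<or>
     (\<forall>U. U \<subseteq> V \<longrightarrow>
        real (ncomp (V - U) (del_edges E U)) - real (ncomp V E) \<le> real (card U) / t)"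

end

theory Submission
  imports Defs
begin

definition adjr :: "'a set set \<Rightarrow> ('a \<times> 'a) set" where
  "adjr A = {(u,v). {u,v} \<in> A}"

lemma reach_eq:
  assumes "\<forall>e\<in>A. e \<subseteq> V"
  shows "reach V A = (adjr A)\<^sup>* \<inter> (V \<times> V)"
proof -
  have "{(u, v). u \<in> V \<and> v \<in> V \<and> {u, v} \<in> A} = {(u,v). {u,v} \<in> A}"
    using assms by auto
  thus ?thesis unfolding reach_def adjr_def by simp
qed

lemma rt_sub: "(x,y) \<in> (adjr A)\<^sup>* \<Longrightarrow> y = x \<or> y \<in> \<Union>A"
  by (induction rule: rtrancl_induct) (auto simp: adjr_def)

lemma rt_iso:
  assumes "x \<notin> \<Union>A"
  shows "(adjr A)\<^sup>* `` {x} = {x}"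
proof -
  { fix y assume "(x,y) \<in> (adjr A)\<^sup>*"
    hence "y = x"
    proof (cases rule: converse_rtranclE)
      case base then show ?thesis by simp
    next
      case (step z) then show ?thesis using assms by (auto simp: adjr_def)
    qed }
  thus ?thesis by auto
qed

lemma img_eq:
  assumes "\<forall>e\<in>A. e \<subseteq> V" "x \<in> V"
  shows "reach V A `` {x} = (adjr A)\<^sup>* `` {x}"
  using rt_sub[of x _ A] assms by (auto simp: reach_eq[OF assms(1)])

lemma quot_img: "V // R = (\<lambda>x. R `` {x}) ` V"
  by (auto simp: quotient_def)

lemma quot_eq:
  assumes "\<forall>e\<in>A. e \<subseteq> V"
  shows "V // reach V A = (\<lambda>x. (adjr A)\<^sup>* `` {x}) ` V"
  unfolding quot_img using img_eq[OF assms] by (intro image_cong) auto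

lemma ncomp_le: "finite V \<Longrightarrow> ncomp V A \<le> card V"
  unfolding ncomp_def quot_img by (rule card_image_le)

lemma ncomp_less:
  assumes "finite V" "\<forall>e\<in>A. e \<subseteq> V" "{u,v} \<in> A" "u \<noteq> v"
  shows "ncomp V A < card V"
proof -
  define f where "f = (\<lambda>x. (adjr A)\<^sup>* `` {x})"
  have uv: "u \<in> V" "v \<in> V" using assms by auto
  have "(u,v) \<in> adjr A" "(v,u) \<in> adjr A" using assms(3) by (auto simp: adjr_def insert_commute)
  hence "(u,v) \<in> (adjr A)\<^sup>*" "(v,u) \<in> (adjr A)\<^sup>*" by auto
  hence "f u = f v" unfolding f_def by (auto intro: rtrancl_trans)
  have "f ` V = f ` (V - {v})"
  proof
    show "f ` V \<subseteq> f ` (V - {v})"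
    proof
      fix y assume "y \<in> f ` V"
      then obtain x where x: "x \<in> V" "y = f x" by auto
      show "y \<in> f ` (V - {v})"
      proof (cases "x = v")
        case True
        hence "y = f u" using x \<open>f u = f v\<close> by simp
        thus ?thesis using uv assms(4) by auto
      next
        case False thus ?thesis using x by auto
      qed
    qed
  qed auto
  hence "card (f ` V) \<le> card (V - {v})" by (metis card_image_le assms(1) finite_Diff)
  also have "\<dots> < card V" using uv assms(1) by (intro card_Diff1_less)
  finally show ?thesis unfolding ncomp_def quot_eq[OF assms(2)] f_def .
qed

lemma ncomp_del:
  assumes "finite V" "U \<subseteq> V" "\<forall>e\<in>E. e \<subseteq> V"
  shows "ncomp V (del_edges E U) = ncomp (V-U) (del_edges E U) + card U"
proof -
  define A where "A = del_edges E U"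
  have A1: "\<forall>e\<in>A. e \<subseteq> V" and A2: "\<forall>e\<in>A. e \<subseteq> V - U"
    using assms by (auto simp: A_def del_edges_def)
  define f where "f = (\<lambda>x. (adjr A)\<^sup>* `` {x})"
  have c1: "ncomp V A = card (f ` V)" unfolding ncomp_def quot_eq[OF A1] f_def ..
  have c2: "ncomp (V-U) A = card (f ` (V-U))" unfolding ncomp_def quot_eq[OF A2] f_def ..
  have VU: "f ` V = f ` (V-U) \<union> f ` U" using assms(2) by auto
  have fU: "f ` U = (\<lambda>x. {x}) ` U"
  proof (intro image_cong refl)
    fix x assume "x \<in> U"
    hence "x \<notin> \<Union>A" using A2 by auto
    thus "f x = {x}" unfolding f_def by (rule rt_iso)
  qed
  have disj: "f ` (V-U) \<inter> f ` U = {}"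
  proof (rule ccontr)
    assume "f ` (V-U) \<inter> f ` U \<noteq> {}"
    then obtain y u where y: "y \<in> V - U" "u \<in> U" "f y = {u}" using fU by auto
    have "y \<in> f y" unfolding f_def by auto
    thus False using y by auto
  qed
  have "card (f ` V) = card (f ` (V-U)) + card (f ` U)"
    unfolding VU using disj assms by (intro card_Un_disjoint) (auto intro: finite_subset)
  moreover have "card (f ` U) = card U" unfolding fU by (rule card_image) (auto simp: inj_on_def)
  ultimately show ?thesis using c1 c2 A_def by simp
qed

lemma handshake:
  assumes "simple_graph V E"
  shows "(\<Sum>v\<in>V. degree E v) = 2 * card E"
proof -
  have finV: "finite V" using assms by (simp add: simple_graph_def)
  have "E \<subseteq> Pow V" using assms by (auto simp: simple_graph_def)
  hence finE: "finite E" using finV by (meson finite_Pow_iff finite_subset)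
  have d: "degree E v = (\<Sum>e\<in>E. if v \<in> e then 1 else 0)" for v
  proof -
    have "card {e\<in>E. v \<in> e} = (\<Sum>e\<in>{e\<in>E. v \<in> e}. 1)" by (rule card_eq_sum)
    also have "\<dots> = (\<Sum>e\<in>E. if v \<in> e then 1 else 0)" by (rule sum.inter_filter[OF finE, of "\<lambda>_. 1" "\<lambda>e. v \<in> e"])
    finally show ?thesis unfolding degree_def .
  qed
  have i: "(\<Sum>v\<in>V. if v \<in> e then 1 else 0) = (2::nat)" if eE: "e \<in> E" for e
  proof -
    have "\<forall>e\<in>E. \<exists>u v. u \<in> V \<and> v \<in> V \<and> u \<noteq> v \<and> e = {u, v}"
      using assms unfolding simple_graph_def by simp
    then obtain a b where ab: "a \<in> V" "b \<in> V" "a \<noteq> b" "e = {a,b}"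
      using eE by meson
    have "(\<Sum>v\<in>V. if v \<in> e then 1 else 0) = (\<Sum>v\<in>{v\<in>V. v \<in> e}. (1::nat))"
      by (rule sum.inter_filter[OF finV, of "\<lambda>_. 1" "\<lambda>v. v \<in> e", symmetric])
    also have "\<dots> = card {v\<in>V. v \<in> e}" by (rule card_eq_sum[symmetric])
    also have "{v\<in>V. v \<in> e} = {a,b}" using ab by auto
    finally show ?thesis using ab by simp
  qed
  have "(\<Sum>v\<in>V. degree E v) = (\<Sum>v\<in>V. \<Sum>e\<in>E. if v \<in> e then 1 else 0)" using d by simp
  also have "\<dots> = (\<Sum>e\<in>E. \<Sum>v\<in>V. if v \<in> e then 1 else 0)" by (rule sum.swap)
  also have "\<dots> = (\<Sum>e\<in>E. 2)" using i by simp
  finally show ?thesis by simp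
qed

theorem theorem3p13:
  fixes V :: "'a set" and E :: "'a set set"
  assumes "simple_graph V E"
    and "E \<noteq> {}"
    and "uniformly_dense V E"
  shows "tough V E (density V E / real (max_degree V E)) \<and>
         (regular V E \<and> connected_graph V E \<longrightarrow> tough V E 1)"
proof -
  have finV: "finite V" and edges: "\<forall>e\<in>E. \<exists>u v. u\<in>V \<and> v\<in>V \<and> u\<noteq>v \<and> e={u,v}"
    using assms(1) by (auto simp: simple_graph_def)
  have sub: "\<forall>e\<in>E. e \<subseteq> V" using edges by auto
  have "E \<subseteq> Pow V" using sub by auto
  hence finE: "finite E" using finV by (meson finite_Pow_iff finite_subset)
  obtain e0 where e0: "e0 \<in> E" using assms(2) by auto
  then obtain a b where ab: "a\<in>V" "b\<in>V" "a\<noteq>b" "e0={a,b}" using edges by blast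
  define n where "n = card V"
  define c0 where "c0 = ncomp V E"
  define \<rho> where "\<rho> = density V E"
  define \<Delta> where "\<Delta> = max_degree V E"
  have c0lt: "c0 < n" unfolding c0_def n_def using ncomp_less[OF finV sub, of a b] ab e0 by simp
  have mrE: "real (mrank V E) = real n - real c0"
    unfolding mrank_def c0_def[symmetric] n_def[symmetric] using c0lt by simp
  have mrEpos: "real (mrank V E) > 0" using mrE c0lt by simp
  have cEpos: "real (card E) > 0" using finE assms(2) by (simp add: card_gt_0_iff)
  have \<rho>pos: "\<rho> > 0" unfolding \<rho>_def density_def using mrEpos cEpos by simp
  have \<rho>E: "\<rho> * (real n - real c0) = real (card E)"
    unfolding \<rho>_def density_def mrE[symmetric] using mrEpos by simp
  have key: "\<rho> * (real (ncomp (V-U) (del_edges E U)) + real (card U) - real c0)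
             \<le> real (card U) * real \<Delta>" if U: "U \<subseteq> V" for U
  proof -
    define A where "A = del_edges E U"
    define c1 where "c1 = ncomp (V-U) A"
    define k where "k = card U"
    have AE: "A \<subseteq> E" by (auto simp: A_def del_edges_def)
    have subA: "\<forall>e\<in>A. e \<subseteq> V" using AE sub by auto
    have cA: "ncomp V A = c1 + k" unfolding A_def c1_def k_def by (rule ncomp_del[OF finV U sub])
    have cAle: "ncomp V A \<le> n" unfolding n_def by (rule ncomp_le[OF finV])
    have mrA: "real (mrank V A) = real n - real (ncomp V A)"
      unfolding mrank_def n_def[symmetric] using cAle by simp
    have dens: "real (card A) \<le> \<rho> * real (mrank V A)"
    proof (cases "A = {}")
      case True then show ?thesis using \<rho>pos by simp
    next
      case False
      then obtain e where eA: "e \<in> A" by auto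
      hence "e \<in> E" using AE by auto
      then obtain u v where uv: "u\<noteq>v" "e = {u,v}" using edges by meson
      hence "{u,v} \<in> A" using eA by simp
      hence "ncomp V A < card V" using ncomp_less[OF finV subA _ uv(1)] by simp
      hence mp: "real (mrank V A) > 0" unfolding mrank_def by simp
      have "real (card A) / real (mrank V A) \<le> \<rho>"
        using assms(3) AE False unfolding uniformly_dense_def \<rho>_def by blast
      thus ?thesis using mp by (simp add: pos_divide_le_eq mult.commute)
    qed
    have "card (E - A) = card E - card A" using finE AE by (meson card_Diff_subset finite_subset)
    moreover have "card A \<le> card E" using finE AE by (rule card_mono)
    ultimately have cardE: "card E = card A + card (E - A)" by simp
    have "E - A \<subseteq> (\<Union>u\<in>U. {e\<in>E. u \<in> e})" by (auto simp: A_def del_edges_def)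
    hence "card (E - A) \<le> card (\<Union>u\<in>U. {e\<in>E. u \<in> e})"
      by (intro card_mono) (rule finite_subset[OF _ finE], auto)
    also have "\<dots> \<le> (\<Sum>u\<in>U. card {e\<in>E. u \<in> e})"
      using finV U by (intro card_UN_le) (auto intro: finite_subset)
    also have "\<dots> \<le> (\<Sum>u\<in>U. \<Delta>)"
    proof (intro sum_mono)
      fix u assume "u \<in> U"
      hence "u \<in> V" using U by auto
      thus "card {e\<in>E. u \<in> e} \<le> \<Delta>" unfolding \<Delta>_def max_degree_def degree_def[symmetric]
        using finV by (intro Max_ge) auto
    qed
    also have "\<dots> = k * \<Delta>" by (simp add: k_def)
    finally have "real (card (E - A)) \<le> real (k * \<Delta>)" by (rule of_nat_mono)
    hence ED: "real (card (E - A)) \<le> real k * real \<Delta>" by simp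
    have "\<rho> * (real c1 + real k - real c0) = \<rho> * (real n - real c0) - \<rho> * (real n - real (ncomp V A))"
      using cA by (simp add: algebra_simps)
    also have "\<dots> \<le> real (card E) - real (card A)" using \<rho>E dens mrA by simp
    also have "\<dots> = real (card (E - A))" using cardE by simp
    finally show ?thesis using ED unfolding A_def c1_def k_def by simp
  qed
  have part1: "tough V E (\<rho> / real \<Delta>)"
    unfolding tough_def
  proof (intro disjI2 allI impI)
    fix U assume U: "U \<subseteq> V"
    define c1 where "c1 = real (ncomp (V-U) (del_edges E U))"
    define k where "k = real (card U)"
    have K: "\<rho> * (c1 + k - real c0) \<le> k * real \<Delta>" using key[OF U] unfolding c1_def k_def .
    have k0: "k \<ge> 0" unfolding k_def by simp
    have K2: "\<rho> * (c1 - real c0) \<le> k * real \<Delta>"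
    proof -
      have "\<rho> * k \<ge> 0" using \<rho>pos k0 by simp
      moreover have "\<rho> * (c1 - real c0) = \<rho> * (c1 + k - real c0) - \<rho> * k" by (simp add: algebra_simps)
      ultimately show ?thesis using K by linarith
    qed
    show "c1 - real (ncomp V E) \<le> k / (\<rho> / real \<Delta>)"
    proof (cases "\<Delta> = 0")
      case True
      hence "\<rho> * (c1 - real c0) \<le> 0" using K2 by simp
      hence "c1 - real c0 \<le> 0" using \<rho>pos by (simp add: mult_le_0_iff)
      thus ?thesis using True c0_def by simp
    next
      case False
      have "k / (\<rho> / real \<Delta>) = k * real \<Delta> / \<rho>" using False by simp
      moreover have "c1 - real c0 \<le> k * real \<Delta> / \<rho>"
        using K2 \<rho>pos by (simp add: pos_le_divide_eq mult.commute)
      ultimately show ?thesis using c0_def by simp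
    qed
  qed
  have part2: "tough V E 1" if reg: "regular V E" and con: "connected_graph V E"
  proof -
    have c01: "c0 = 1" using con unfolding connected_graph_def c0_def .
    define d where "d = degree E a"
    have degs: "degree E v = d" if "v \<in> V" for v using reg that ab(1) unfolding regular_def d_def by blast
    have "degree E ` V = {d}" using degs ab(1) by auto
    hence \<Delta>d: "\<Delta> = d" unfolding \<Delta>_def max_degree_def by simp
    have "(\<Sum>v\<in>V. degree E v) = n * d" using degs unfolding n_def by simp
    hence "n * d = 2 * card E" using handshake[OF assms(1)] by simp
    hence "real (n * d) = real (2 * card E)" by (rule arg_cong)
    hence hs: "real n * real d = 2 * real (card E)" by simp
    have npos: "real n > 0" using c0lt by simp
    have "real n * real d = 2 * \<rho> * (real n - 1)" using hs \<rho>E c01 by simp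
    also have "\<dots> \<le> 2 * \<rho> * real n" using \<rho>pos by simp
    finally have "real d \<le> 2 * \<rho>" using npos by (simp add: mult.commute)
    show ?thesis unfolding tough_def
    proof (intro disjI2 allI impI)
      fix U assume U: "U \<subseteq> V"
      define c1 where "c1 = real (ncomp (V-U) (del_edges E U))"
      define k where "k = real (card U)"
      have K: "\<rho> * (c1 + k - 1) \<le> k * real d" using key[OF U] c01 \<Delta>d unfolding c1_def k_def by simp
      have k0: "k \<ge> 0" unfolding k_def by simp
      have "k * real d \<le> k * (2 * \<rho>)" using \<open>real d \<le> 2 * \<rho>\<close> k0 by (rule mult_left_mono)
      hence "\<rho> * (c1 + k - 1) \<le> \<rho> * (2 * k)" using K by (simp add: algebra_simps)
      hence "c1 + k - 1 \<le> 2 * k" using \<rho>pos by simp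
      thus "c1 - real (ncomp V E) \<le> k / 1" using c01 c0_def by simp
    qed
  qed
  show ?thesis
  proof (intro conjI impI)
    show "tough V E (density V E / real (max_degree V E))" using part1 unfolding \<rho>_def \<Delta>_def .
  next
    assume "regular V E \<and> connected_graph V E"
    thus "tough V E 1" using part2 by blast
  qed
qed

end
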